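(* Let $\beta\in(0,2)$. Then for all $x\in\mathbb{R}^d$, $$|x|^\beta=2^{d+\beta}\pi^{d/2}\frac{\Gamma(\frac{d+\beta}{2})}{\Gamma(\frac{d+\beta}{\alpha})\,|\Gamma(\frac{-\beta}{2})|}\int_0^\infty[p(t,0)-p(t,x)]\,t^{\frac{d-\alpha+\beta}{\alpha}}\,dt,$$ where $\Gamma(-\beta/2)=\int_0^\infty t^{-1-\beta/2}(e^{-t}-1)\,dt$.
   Context: Let $d\ge1$ be an integer and $\alpha\in(0,d\wedge2)$. $p(t,x)$, $t>0$, $x\in\mathbb{R}^d$, denotes the transition density (from $0$) of the rotationally symmetric $\alpha$-stable Lévy process on $\mathbb{R}^d$, i.e. $\int e^{i\xi\cdot x}p(t,x)\,dx=e^{-t|\xi|^\alpha}$ (the heat kernel of $\Delta^{\alpha/2}=-(-\Delta)^{\alpha/2}$). *)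

theory Defs
  imports "HOL-Analysis.Analysis"
begin

text \<open>Heat kernel of the fractional Laplacian (rotationally symmetric alpha-stable
  transition density from 0) on a Euclidean space 'n of dimension d = DIM('n),
  given by Fourier inversion of exp(-t |xi|^alpha):
  p(t,x) = (2 pi)^(-d) * integral of exp(-i xi.x) exp(-t |xi|^alpha) d xi.\<close>
definition stable_density :: "real \<Rightarrow> real \<Rightarrow> 'n::euclidean_space \<Rightarrow> real" where
  "stable_density \<alpha> t x =
     (2 * pi) powr (- real DIM('n)) *
     Re (LINT \<xi>|lborel. exp (- \<i> * complex_of_real (\<xi> \<bullet> x))
                         * complex_of_real (exp (- t * norm \<xi> powr \<alpha>)))"

end

theory Submission
  imports Defs "HOL-Probability.Characteristic_Functions"
begin
lemma gauss_ft_1d: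
  fixes u a :: real assumes u: "u > 0"
  shows "integrable lborel (\<lambda>y. exp (- \<i> * complex_of_real (y * a)) * complex_of_real (exp (- u * y\<^sup>2)))"
    "(\<integral>y. exp (- \<i> * complex_of_real (y * a)) * complex_of_real (exp (- u * y\<^sup>2)) \<partial>lborel)
       = complex_of_real (sqrt (pi / u) * exp (- a\<^sup>2 / (4 * u)))"
proof -
  define c where "c = sqrt (2 * u)"
  have c: "c > 0" using u by (simp add: c_def)
  have c2: "c\<^sup>2 = 2 * u" using u by (simp add: c_def)
  define t where "t = - a / c"
  let ?g = "\<lambda>x. std_normal_density x *\<^sub>R iexp (t * x)"
  have int_g: "integrable lborel ?g"
    by (rule Bochner_Integration.integrable_bound[OF integrable_normal_density])
       (auto simp: norm_mult)
  have "char std_normal_distribution t = (\<integral>x. ?g x \<partial>lborel)"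
    unfolding char_def by (subst integral_density) auto
  hence I1: "(\<integral>x. ?g x \<partial>lborel) = exp (- (t^2) / 2)"
    by (simp add: char_std_normal_distribution)
  have eq: "?g (0 + c * y) = complex_of_real (1 / sqrt (2 * pi)) *
      (exp (- \<i> * complex_of_real (y * a)) * complex_of_real (exp (- u * y\<^sup>2)))" for y
  proof -
    have "t * (c * y) = - (y * a)" using c by (simp add: t_def field_simps)
    moreover have "- (c * y)\<^sup>2 / 2 = - u * y\<^sup>2" using c2 by (simp add: power_mult_distrib)
    ultimately show ?thesis
      by (simp add: std_normal_density_def scaleR_conv_of_real mult_ac)
  qed
  have int2: "integrable lborel (\<lambda>y. ?g (0 + c * y))"
    using lborel_integrable_real_affine[OF int_g, of c 0] c by simp
  have I2: "(\<integral>x. ?g x \<partial>lborel) = c *\<^sub>R (\<integral>y. ?g (0 + c * y) \<partial>lborel)"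
    using lborel_integral_real_affine[of c ?g 0] c by simp
  have k: "complex_of_real (1 / sqrt (2 * pi)) \<noteq> 0" by simp
  show "integrable lborel (\<lambda>y. exp (- \<i> * complex_of_real (y * a)) * complex_of_real (exp (- u * y\<^sup>2)))"
  proof -
    have "integrable lborel (\<lambda>y. complex_of_real (sqrt (2 * pi)) * ?g (0 + c * y))"
      using int2 by (rule integrable_mult_right)
    thus ?thesis unfolding eq mult.assoc[symmetric] of_real_mult[symmetric] by simp
  qed
  have "(\<integral>y. ?g (0 + c * y) \<partial>lborel) = complex_of_real (1 / sqrt (2 * pi)) *
      (\<integral>y. exp (- \<i> * complex_of_real (y * a)) * complex_of_real (exp (- u * y\<^sup>2)) \<partial>lborel)"
    unfolding eq by simp
  define X where "X = (\<integral>y. exp (- \<i> * complex_of_real (y * a)) * complex_of_real (exp (- u * y\<^sup>2)) \<partial>lborel)"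
  have h: "complex_of_real (c / sqrt (2 * pi)) * X = complex_of_real (exp (- (t^2) / 2))"
    using I1 I2 \<open>(\<integral>y. ?g (0 + c * y) \<partial>lborel) = _\<close>
    by (simp add: scaleR_conv_of_real X_def)
  have e1: "(sqrt (2*pi)/c) * (c / sqrt (2*pi)) = 1" using c by simp
  have "X = complex_of_real ((sqrt (2*pi)/c) * (c / sqrt (2*pi))) * X" by (simp only: e1 of_real_1 mult_1)
  also have "\<dots> = complex_of_real (sqrt (2*pi)/c) * (complex_of_real (c / sqrt (2*pi)) * X)"
    by (simp only: of_real_mult mult.assoc)
  also have "\<dots> = complex_of_real (sqrt (2*pi)/c * exp (- (t^2) / 2))"
    by (simp only: h of_real_mult)
  finally have XX: "X = complex_of_real (sqrt (2*pi)/c * exp (- (t^2) / 2))" .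
  have "- (t^2) / 2 = - a\<^sup>2 / (4 * u)" using c2 u by (simp add: t_def power_divide)
  moreover have "sqrt (2 * pi) / c = sqrt (pi / u)" using u
    by (simp add: c_def real_sqrt_divide[symmetric])
  ultimately show "(\<integral>y. exp (- \<i> * complex_of_real (y * a)) * complex_of_real (exp (- u * y\<^sup>2)) \<partial>lborel)
       = complex_of_real (sqrt (pi / u) * exp (- a\<^sup>2 / (4 * u)))"
    using XX unfolding X_def by simp
qed

lemma inner_sum_Basis_eq:
  fixes f :: "'n::euclidean_space \<Rightarrow> real"
  assumes "b \<in> Basis"
  shows "(\<Sum>b'\<in>Basis. f b' *\<^sub>R b') \<bullet> b = f b"
  using assms by (simp add: inner_sum_left inner_Basis if_distrib cong: if_cong)

lemma norm_sq_Basis: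
  fixes \<xi> :: "'n::euclidean_space"
  shows "(norm \<xi>)\<^sup>2 = (\<Sum>b\<in>Basis. (\<xi> \<bullet> b)\<^sup>2)"
  unfolding power2_norm_eq_inner by (subst euclidean_inner) (simp add: power2_eq_square)

lemma lborel_prod_complex:
  fixes f :: "'n::euclidean_space \<Rightarrow> real \<Rightarrow> complex"
  assumes int: "\<And>b. b \<in> Basis \<Longrightarrow> integrable lborel (f b)"
  shows "integrable lborel (\<lambda>x::'n. \<Prod>b\<in>Basis. f b (x \<bullet> b))"
    "(\<integral>x. (\<Prod>b\<in>Basis. f b (x \<bullet> b)) \<partial>(lborel::'n measure)) = (\<Prod>b\<in>Basis. (\<integral>y. f b y \<partial>lborel))"
proof -
  interpret product_sigma_finite "\<lambda>_::'n. lborel :: real measure" by standard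
  have meas_f: "f b \<in> borel_measurable borel" if "b \<in> Basis" for b
    using int[OF that] by (simp add: borel_measurable_integrable)
  have mg: "(\<lambda>g. \<Sum>b\<in>Basis. g b *\<^sub>R b) \<in> measurable (\<Pi>\<^sub>M b\<in>(Basis::'n set). lborel) borel"
    by measurable
  have mF: "(\<lambda>x::'n. \<Prod>b\<in>Basis. f b (x \<bullet> b)) \<in> borel_measurable borel"
    using meas_f by measurable
  have eq: "(\<Prod>b\<in>Basis. f b ((\<Sum>b'\<in>Basis. g b' *\<^sub>R b') \<bullet> b)) = (\<Prod>b\<in>Basis. f b (g b))" for g :: "'n \<Rightarrow> real"
    by (intro prod.cong refl) (simp add: inner_sum_Basis_eq)
  have pint: "integrable (\<Pi>\<^sub>M b\<in>(Basis::'n set). lborel) (\<lambda>g. \<Prod>b\<in>Basis. f b (g b))"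
    by (rule product_integrable_prod) (auto intro: int)
  show "integrable lborel (\<lambda>x::'n. \<Prod>b\<in>Basis. f b (x \<bullet> b))"
    by (subst lborel_eq, subst integrable_distr_eq[OF mg mF]) (simp add: eq pint)
  show "(\<integral>x. (\<Prod>b\<in>Basis. f b (x \<bullet> b)) \<partial>(lborel::'n measure)) = (\<Prod>b\<in>Basis. (\<integral>y. f b y \<partial>lborel))"
    by (subst lborel_eq, subst integral_distr[OF mg mF]) (simp add: eq product_integral_prod int)
qed


lemma gauss_ft:
  fixes x :: "'n::euclidean_space" and u :: real
  assumes u: "u > 0"
  shows "integrable lborel (\<lambda>\<xi>::'n. exp (- \<i> * complex_of_real (\<xi> \<bullet> x)) * complex_of_real (exp (- u * (norm \<xi>)\<^sup>2)))"
    "(\<integral>\<xi>. exp (- \<i> * complex_of_real (\<xi> \<bullet> x)) * complex_of_real (exp (- u * (norm \<xi>)\<^sup>2)) \<partial>(lborel::'n measure))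
      = complex_of_real ((pi / u) powr (real DIM('n) / 2) * exp (- (norm x)\<^sup>2 / (4 * u)))"
proof -
  define f where "f b y = exp (- \<i> * complex_of_real (y * (x \<bullet> b))) * complex_of_real (exp (- u * y\<^sup>2))" for b y
  have G: "exp (- \<i> * complex_of_real (\<xi> \<bullet> x)) * complex_of_real (exp (- u * (norm \<xi>)\<^sup>2))
      = (\<Prod>b\<in>Basis. f b (\<xi> \<bullet> b))" for \<xi> :: 'n
  proof -
    have "(\<Prod>b\<in>Basis. f b (\<xi> \<bullet> b)) = (\<Prod>b\<in>Basis. exp (- \<i> * complex_of_real ((\<xi> \<bullet> b) * (x \<bullet> b))))
        * (\<Prod>b\<in>Basis. complex_of_real (exp (- u * (\<xi> \<bullet> b)\<^sup>2)))"
      unfolding f_def by (rule prod.distrib)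
    also have "(\<Prod>b\<in>Basis. exp (- \<i> * complex_of_real ((\<xi> \<bullet> b) * (x \<bullet> b))))
        = exp (\<Sum>b\<in>Basis. - \<i> * complex_of_real ((\<xi> \<bullet> b) * (x \<bullet> b)))"
      by (simp add: exp_sum)
    also have "(\<Sum>b\<in>Basis. - \<i> * complex_of_real ((\<xi> \<bullet> b) * (x \<bullet> b))) = - \<i> * complex_of_real (\<xi> \<bullet> x)"
      by (simp add: euclidean_inner[of \<xi> x] sum_distrib_left sum_negf)
    also have "(\<Prod>b\<in>Basis. complex_of_real (exp (- u * (\<xi> \<bullet> b)\<^sup>2)))
        = complex_of_real (exp (\<Sum>b\<in>Basis. - u * (\<xi> \<bullet> b)\<^sup>2))"
      by (simp add: exp_sum)
    also have "(\<Sum>b\<in>Basis. - u * (\<xi> \<bullet> b)\<^sup>2) = - u * (norm \<xi>)\<^sup>2"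
      by (simp add: norm_sq_Basis sum_distrib_left sum_negf)
    finally show ?thesis ..
  qed
  have int: "integrable lborel (f b)" for b
    unfolding f_def using gauss_ft_1d(1)[OF u] .
  have val: "(\<integral>y. f b y \<partial>lborel) = complex_of_real (sqrt (pi / u) * exp (- (x \<bullet> b)\<^sup>2 / (4 * u)))" for b
    unfolding f_def using gauss_ft_1d(2)[OF u] .
  show "integrable lborel (\<lambda>\<xi>::'n. exp (- \<i> * complex_of_real (\<xi> \<bullet> x)) * complex_of_real (exp (- u * (norm \<xi>)\<^sup>2)))"
    unfolding G by (rule lborel_prod_complex(1)[OF int])
  have "(\<integral>\<xi>. exp (- \<i> * complex_of_real (\<xi> \<bullet> x)) * complex_of_real (exp (- u * (norm \<xi>)\<^sup>2)) \<partial>(lborel::'n measure))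
     = (\<Prod>b\<in>Basis. complex_of_real (sqrt (pi / u) * exp (- (x \<bullet> b)\<^sup>2 / (4 * u))))"
    unfolding G by (simp add: lborel_prod_complex(2)[OF int] val)
  also have "\<dots> = complex_of_real ((\<Prod>b\<in>(Basis::'n set). sqrt (pi / u)) * (\<Prod>b\<in>Basis. exp (- (x \<bullet> b)\<^sup>2 / (4 * u))))"
    by (simp add: prod.distrib)
  also have "(\<Prod>b\<in>(Basis::'n set). sqrt (pi / u)) = (pi / u) powr (real DIM('n) / 2)"
    using u by (simp add: powr_half_sqrt[symmetric] powr_realpow[symmetric] powr_powr)
  also have "(\<Prod>b\<in>(Basis::'n set). exp (- (x \<bullet> b)\<^sup>2 / (4 * u))) = exp (\<Sum>b\<in>Basis. - (x \<bullet> b)\<^sup>2 / (4 * u))"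
    by (simp add: exp_sum)
  also have "(\<Sum>b\<in>(Basis::'n set). - (x \<bullet> b)\<^sup>2 / (4 * u)) = - (norm x)\<^sup>2 / (4 * u)"
    by (simp add: norm_sq_Basis sum_divide_distrib[symmetric] sum_negf)
  finally show "(\<integral>\<xi>. exp (- \<i> * complex_of_real (\<xi> \<bullet> x)) * complex_of_real (exp (- u * (norm \<xi>)\<^sup>2)) \<partial>(lborel::'n measure))
      = complex_of_real ((pi / u) powr (real DIM('n) / 2) * exp (- (norm x)\<^sup>2 / (4 * u)))" .
qed

lemma SUP_indicator_ennreal:
  fixes F :: "real \<Rightarrow> ennreal"
  assumes cover: "x \<in> A \<Longrightarrow> \<exists>n. x \<in> B n" and sub: "\<And>n. B n \<subseteq> A"
  shows "(SUP n. F x * indicator (B n) x) = F x * indicator A x"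
proof (cases "x \<in> A")
  case True
  then obtain n where n: "x \<in> B n" using cover by blast
  show ?thesis
  proof (rule antisym)
    show "(SUP n. F x * indicator (B n) x) \<le> F x * indicator A x"
      using True by (intro SUP_least) (auto simp: indicator_def)
    show "F x * indicator A x \<le> (SUP n. F x * indicator (B n) x)"
      using True n by (intro SUP_upper2[of n]) auto
  qed
next
  case False
  then have "x \<notin> B n" for n using sub by blast
  with False show ?thesis by simp
qed

lemma indicator_mono_ennreal: "A \<subseteq> B \<Longrightarrow> (indicator A x :: ennreal) \<le> indicator B x"
  by (auto simp: indicator_def)

lemma nn_subst_exp:
  fixes F :: "real \<Rightarrow> ennreal"
  assumes [measurable]: "F \<in> borel_measurable borel"
  shows "(\<integral>\<^sup>+ u. F u * indicator {0<..} u \<partial>lborel) = (\<integral>\<^sup>+ s. F (exp s) * ennreal (exp s) \<partial>lborel)"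
proof -
  define a where "a n = - real n - 1" for n :: nat
  define b where "b n = real n + 1" for n :: nat
  have ab: "a n < b n" for n by (simp add: a_def b_def)
  have step: "(\<integral>\<^sup>+ u. F u * indicator {exp (a n)..exp (b n)} u \<partial>lborel)
      = (\<integral>\<^sup>+ s. F (exp s) * ennreal (exp s) * indicator {a n..b n} s \<partial>lborel)" for n
    by (rule nn_integral_substitution_aux[OF _ _ _ _ _ ab])
       (auto intro!: derivative_eq_intros continuous_intros)
  have L: "(\<integral>\<^sup>+ u. F u * indicator {0<..} u \<partial>lborel)
      = (SUP n. \<integral>\<^sup>+ u. F u * indicator {exp (a n)..exp (b n)} u \<partial>lborel)"
  proof -
    have "(\<integral>\<^sup>+ u. F u * indicator {0<..} u \<partial>lborel)
        = (\<integral>\<^sup>+ u. (SUP n. F u * indicator {exp (a n)..exp (b n)} u) \<partial>lborel)"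
    proof (intro nn_integral_cong, rule SUP_indicator_ennreal[symmetric])
      fix x :: real assume x: "x \<in> {0<..}"
      obtain n1 :: nat where n1: "\<bar>ln x\<bar> < real n1" using reals_Archimedean2 by blast
      have ex: "exp (ln x) = x" using x by simp
      have e1: "exp (a n1) \<le> exp (ln x)" using n1 unfolding a_def by simp
      have e2: "exp (ln x) \<le> exp (b n1)" using n1 unfolding b_def by simp
      from e1 e2 have "exp (a n1) \<le> x" "x \<le> exp (b n1)" unfolding ex by auto
      then show "\<exists>n. x \<in> {exp (a n)..exp (b n)}" by (intro exI[of _ n1]) simp
    qed (auto intro: less_le_trans[OF exp_gt_zero])
    also have "\<dots> = (SUP n. \<integral>\<^sup>+ u. F u * indicator {exp (a n)..exp (b n)} u \<partial>lborel)"
    proof (rule nn_integral_monotone_convergence_SUP)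
      show "incseq (\<lambda>n u. F u * indicator {exp (a n)..exp (b n)} u)"
        by (intro monoI le_funI mult_left_mono indicator_mono_ennreal) (auto simp: a_def b_def)
    qed auto
    finally show ?thesis .
  qed
  have R: "(\<integral>\<^sup>+ s. F (exp s) * ennreal (exp s) \<partial>lborel)
      = (SUP n. \<integral>\<^sup>+ s. F (exp s) * ennreal (exp s) * indicator {a n..b n} s \<partial>lborel)"
  proof -
    have "(\<integral>\<^sup>+ s. F (exp s) * ennreal (exp s) \<partial>lborel)
        = (\<integral>\<^sup>+ s. (SUP n. F (exp s) * ennreal (exp s) * indicator {a n..b n} s) \<partial>lborel)"
    proof (intro nn_integral_cong)
      fix x :: real
      have "(SUP n. F (exp x) * ennreal (exp x) * indicator {a n..b n} x) = F (exp x) * ennreal (exp x) * indicator UNIV x"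
      proof (rule SUP_indicator_ennreal)
        obtain n1 :: nat where n1: "\<bar>x\<bar> < real n1" using reals_Archimedean2 by blast
        then show "\<exists>n. x \<in> {a n..b n}" by (intro exI[of _ n1]) (auto simp: a_def b_def)
      qed auto
      then show "F (exp x) * ennreal (exp x) = (SUP n. F (exp x) * ennreal (exp x) * indicator {a n..b n} x)"
        by simp
    qed
    also have "\<dots> = (SUP n. \<integral>\<^sup>+ s. F (exp s) * ennreal (exp s) * indicator {a n..b n} s \<partial>lborel)"
    proof (rule nn_integral_monotone_convergence_SUP)
      show "incseq (\<lambda>n s. F (exp s) * ennreal (exp s) * indicator {a n..b n} s)"
        by (intro monoI le_funI mult_left_mono indicator_mono_ennreal) (auto simp: a_def b_def)
    qed auto
    finally show ?thesis .
  qed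
  show ?thesis unfolding L R step ..
qed


lemma nn_subst_inv:
  fixes F :: "real \<Rightarrow> ennreal"
  assumes [measurable]: "F \<in> borel_measurable borel"
  shows "(\<integral>\<^sup>+ u. F u * indicator {0<..} u \<partial>lborel)
       = (\<integral>\<^sup>+ v. F (1 / v) * ennreal (1 / v\<^sup>2) * indicator {0<..} v \<partial>lborel)"
proof -
  have "(\<integral>\<^sup>+ u. F u * indicator {0<..} u \<partial>lborel) = (\<integral>\<^sup>+ s. F (exp s) * ennreal (exp s) \<partial>lborel)"
    by (rule nn_subst_exp) simp
  also have "\<dots> = ennreal \<bar>-1\<bar> * (\<integral>\<^sup>+ s. F (exp (0 + -1 * s)) * ennreal (exp (0 + -1 * s)) \<partial>lborel)"
    by (rule nn_integral_real_affine) auto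
  also have "\<dots> = (\<integral>\<^sup>+ s. F (1 / exp s) * ennreal (1 / (exp s)\<^sup>2) * ennreal (exp s) \<partial>lborel)"
  proof -
    have "ennreal (1 / (exp s)\<^sup>2) * ennreal (exp s) = ennreal (exp (- s))" for s
      by (simp add: ennreal_mult[symmetric] power2_eq_square exp_minus field_simps)
    then show ?thesis by (simp add: exp_minus mult.assoc divide_inverse)
  qed
  also have "\<dots> = (\<integral>\<^sup>+ v. F (1 / v) * ennreal (1 / v\<^sup>2) * indicator {0<..} v \<partial>lborel)"
    by (rule nn_subst_exp[symmetric]) simp
  finally show ?thesis .
qed

lemma gamma_laplace:
  fixes r s :: real
  assumes r: "r > 0" and s: "s > 0"
  shows "(\<integral>\<^sup>+ t. ennreal (t powr (s - 1) * exp (- t * r)) * indicator {0<..} t \<partial>lborel)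
       = ennreal (Gamma s * r powr (- s))"
proof -
  define N where "N = (\<integral>\<^sup>+ t. ennreal (t powr (s - 1) * exp (- t * r)) * indicator {0<..} t \<partial>lborel)"
  have "ennreal (Gamma s) = (\<integral>\<^sup>+ t. ennreal (indicator {0..} t * t powr (s - 1) / exp t) \<partial>lborel)"
    using Gamma_conv_nn_integral_real[OF s] by simp
  also have "\<dots> = ennreal \<bar>r\<bar> * (\<integral>\<^sup>+ t. ennreal (indicator {0..} (0 + r * t) * (0 + r * t) powr (s - 1) / exp (0 + r * t)) \<partial>lborel)"
    by (rule nn_integral_real_affine) (use r in auto)
  also have "(\<integral>\<^sup>+ t. ennreal (indicator {0..} (0 + r * t) * (0 + r * t) powr (s - 1) / exp (0 + r * t)) \<partial>lborel)
      = (\<integral>\<^sup>+ t. ennreal (r powr (s - 1)) * (ennreal (t powr (s - 1) * exp (- t * r)) * indicator {0<..} t) \<partial>lborel)"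
  proof (intro nn_integral_cong)
    fix t :: real
    show "ennreal (indicator {0..} (0 + r * t) * (0 + r * t) powr (s - 1) / exp (0 + r * t))
        = ennreal (r powr (s - 1)) * (ennreal (t powr (s - 1) * exp (- t * r)) * indicator {0<..} t)"
    proof (cases "t > 0")
      case True
      then show ?thesis using r
        by (simp add: ennreal_mult[symmetric] powr_mult exp_minus field_simps zero_le_mult_iff)
    next
      case False
      then show ?thesis using r by (cases "t = 0") (auto simp: zero_le_mult_iff indicator_def)
    qed
  qed
  also have "\<dots> = ennreal (r powr (s - 1)) * N"
    unfolding N_def by (rule nn_integral_cmult) simp
  finally have G: "ennreal (Gamma s) = ennreal (r * r powr (s - 1)) * N"
    using r by (simp add: ennreal_mult mult.assoc)
  have rr: "r * r powr (s - 1) = r powr s" using r by (simp add: powr_diff field_simps)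
  have "N = ennreal (r powr (- s)) * (ennreal (r powr s) * N)"
    using r by (simp add: mult.assoc[symmetric] ennreal_mult[symmetric] powr_add[symmetric])
  also have "\<dots> = ennreal (Gamma s * r powr (- s))"
    using G rr s r by (simp add: ennreal_mult mult.commute)
  finally show ?thesis unfolding N_def .
qed


lemma one_minus_exp_nn:
  fixes w :: real assumes w: "0 \<le> w"
  shows "(\<integral>\<^sup>+ r. ennreal (indicator {0..w} r * exp (- r)) \<partial>lborel) = ennreal (1 - exp (- w))"
proof -
  have int: "integrable lborel (\<lambda>r. indicator {0..w} r *\<^sub>R exp (- r))"
  proof -
    have "continuous_on {0..w} (\<lambda>r. exp (- r))" by (intro continuous_intros)
    from borel_integrable_atLeastAtMost'[OF this] show ?thesis by (simp add: set_integrable_def)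
  qed
  have "integral\<^sup>L lborel (\<lambda>r. indicator {0..w} r *\<^sub>R exp (- r)) = (- exp (- w)) - (- exp (- 0))"
    by (rule integral_FTC_atLeastAtMost[OF w])
       (auto intro!: derivative_eq_intros continuous_intros simp: has_real_derivative_iff_has_vector_derivative[symmetric])
  then show ?thesis
    using int by (subst nn_integral_eq_integral) (auto simp: indicator_def)
qed

lemma powr_tail_nn:
  fixes r \<gamma> :: real assumes r: "0 < r" and g: "0 < \<gamma>"
  shows "(\<integral>\<^sup>+ w. ennreal (w powr (- 1 - \<gamma>)) * indicator {r..} w \<partial>lborel) = ennreal (r powr (- \<gamma>) / \<gamma>)"
proof -
  have "(\<integral>\<^sup>+ w. ennreal (w powr (- 1 - \<gamma>)) * indicator {r..} w \<partial>lborel) = ennreal (0 - (- (r powr (- \<gamma>)) / \<gamma>))"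
  proof (rule nn_integral_FTC_atLeast)
    fix x assume x: "r \<le> x"
    then have x0: "0 < x" using r by simp
    show "((\<lambda>w. - (w powr (- \<gamma>)) / \<gamma>) has_real_derivative x powr (- 1 - \<gamma>)) (at x)"
      using x0 g by (auto intro!: derivative_eq_intros simp: field_simps powr_diff powr_minus)
    show "0 \<le> x powr (- 1 - \<gamma>)" by simp
  next
    show "((\<lambda>w. - (w powr (- \<gamma>)) / \<gamma>) \<longlongrightarrow> 0) at_top"
    proof -
      have h: "((\<lambda>x::real. x powr - \<gamma>) \<longlongrightarrow> 0) at_top"
        using tendsto_neg_powr[OF _ filterlim_ident, of "- \<gamma>"] g by simp
      have "((\<lambda>x::real. - (x powr - \<gamma>) / \<gamma>) \<longlongrightarrow> - 0 / \<gamma>) at_top"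
        by (intro tendsto_divide tendsto_minus h tendsto_const) (use g in simp)
      then show ?thesis by simp
    qed
  qed simp
  then show ?thesis by simp
qed


lemma gamma_neg_integral:
  fixes \<gamma> :: real assumes g0: "0 < \<gamma>" and g1: "\<gamma> < 1"
  shows "(\<integral>\<^sup>+ w. ennreal (w powr (- 1 - \<gamma>) * (1 - exp (- w))) * indicator {0<..} w \<partial>lborel)
       = ennreal (- Gamma (- \<gamma>))"
proof -
  define H where "H w r = ennreal (if 0 < w \<and> 0 \<le> r \<and> r \<le> w then w powr (- 1 - \<gamma>) * exp (- r) else 0)" for w r :: real
  have Hm: "case_prod H \<in> borel_measurable (lborel \<Otimes>\<^sub>M lborel)"
    unfolding H_def by measurable
  have "(\<integral>\<^sup>+ w. ennreal (w powr (- 1 - \<gamma>) * (1 - exp (- w))) * indicator {0<..} w \<partial>lborel)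
      = (\<integral>\<^sup>+ w. (\<integral>\<^sup>+ r. H w r \<partial>lborel) \<partial>lborel)"
  proof (intro nn_integral_cong)
    fix w :: real
    show "ennreal (w powr (- 1 - \<gamma>) * (1 - exp (- w))) * indicator {0<..} w = (\<integral>\<^sup>+ r. H w r \<partial>lborel)"
    proof (cases "0 < w")
      case True
      have "(\<integral>\<^sup>+ r. H w r \<partial>lborel) = (\<integral>\<^sup>+ r. ennreal (w powr (- 1 - \<gamma>)) * ennreal (indicator {0..w} r * exp (- r)) \<partial>lborel)"
        using True by (intro nn_integral_cong) (auto simp: H_def indicator_def ennreal_mult)
      also have "\<dots> = ennreal (w powr (- 1 - \<gamma>)) * ennreal (1 - exp (- w))"
        using True by (subst nn_integral_cmult) (auto simp: one_minus_exp_nn)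
      finally show ?thesis using True by (simp add: ennreal_mult)
    next
      case False
      then show ?thesis by (simp add: H_def)
    qed
  qed
  also have "\<dots> = (\<integral>\<^sup>+ r. (\<integral>\<^sup>+ w. H w r \<partial>lborel) \<partial>lborel)"
    by (rule lborel_pair.Fubini'[symmetric]) (rule Hm)
  also have "\<dots> = (\<integral>\<^sup>+ r. ennreal (r powr (- \<gamma>) * exp (- r) / \<gamma>) * indicator {0<..} r \<partial>lborel)"
  proof (intro nn_integral_cong_AE)
    show "AE r in lborel. (\<integral>\<^sup>+ w. H w r \<partial>lborel) = ennreal (r powr (- \<gamma>) * exp (- r) / \<gamma>) * indicator {0<..} r"
      using AE_lborel_singleton[of 0]
    proof eventually_elim
      fix r :: real assume r0: "r \<noteq> 0"
      show "(\<integral>\<^sup>+ w. H w r \<partial>lborel) = ennreal (r powr (- \<gamma>) * exp (- r) / \<gamma>) * indicator {0<..} r"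
      proof (cases "0 < r")
        case True
        have "(\<integral>\<^sup>+ w. H w r \<partial>lborel) = (\<integral>\<^sup>+ w. ennreal (exp (- r)) * (ennreal (w powr (- 1 - \<gamma>)) * indicator {r..} w) \<partial>lborel)"
          using True by (intro nn_integral_cong) (auto simp: H_def indicator_def ennreal_mult mult.commute)
        also have "\<dots> = ennreal (exp (- r)) * ennreal (r powr (- \<gamma>) / \<gamma>)"
          using True g0 by (subst nn_integral_cmult) (auto simp: powr_tail_nn)
        finally show ?thesis using True g0 by (simp add: ennreal_mult[symmetric] mult_ac)
      next
        case False
        then have "\<And>w. H w r = 0" using r0 by (auto simp: H_def)
        then show ?thesis using False by simp
      qed
    qed
  qed
  also have "\<dots> = ennreal (1 / \<gamma>) * (\<integral>\<^sup>+ r. ennreal (indicator {0..} r * r powr ((1 - \<gamma>) - 1) / exp r) \<partial>lborel)"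
  proof -
    have "(\<integral>\<^sup>+ r. ennreal (r powr (- \<gamma>) * exp (- r) / \<gamma>) * indicator {0<..} r \<partial>lborel)
       = (\<integral>\<^sup>+ r. ennreal (1 / \<gamma>) * ennreal (indicator {0..} r * r powr ((1 - \<gamma>) - 1) / exp r) \<partial>lborel)"
      using g0 by (intro nn_integral_cong) (auto simp: indicator_def ennreal_mult[symmetric] exp_minus field_simps)
    then show ?thesis by (subst (asm) nn_integral_cmult) auto
  qed
  also have "\<dots> = ennreal (1 / \<gamma>) * ennreal (Gamma (1 - \<gamma>))"
    using g1 by (simp add: Gamma_conv_nn_integral_real)
  also have "Gamma (1 - \<gamma>) = - \<gamma> * Gamma (- \<gamma>)"
  proof -
    have "- \<gamma> \<notin> \<int>\<^sub>\<le>\<^sub>0"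
    proof
      assume "- \<gamma> \<in> \<int>\<^sub>\<le>\<^sub>0"
      then obtain n where n: "- \<gamma> = real_of_int n" by (auto elim!: nonpos_Ints_cases)
      then have "real_of_int n < 0" "real_of_int n > -1" using g0 g1 by auto
      then have "n < 0" "n > -1" by linarith+
      then show False by simp
    qed
    from Gamma_plus1[OF this] show ?thesis by simp
  qed
  also have "ennreal (1 / \<gamma>) * ennreal (- \<gamma> * Gamma (- \<gamma>)) = ennreal (- Gamma (- \<gamma>))"
    using g0 by (subst ennreal_mult'[symmetric]) auto
  finally show ?thesis .
qed


lemma J_integral:
  fixes \<gamma> c :: real assumes g0: "0 < \<gamma>" and g1: "\<gamma> < 1" and c: "0 \<le> c"
  shows "(\<integral>\<^sup>+ u. ennreal (u powr (\<gamma> - 1) * (1 - exp (- c / u))) * indicator {0<..} u \<partial>lborel)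
       = ennreal (c powr \<gamma> * (- Gamma (- \<gamma>)))"
proof (cases "c = 0")
  case True
  then show ?thesis by simp
next
  case False
  with c have c0: "0 < c" by simp
  define F where "F u = ennreal (u powr (\<gamma> - 1) * (1 - exp (- c / u)))" for u :: real
  have "(\<integral>\<^sup>+ u. F u * indicator {0<..} u \<partial>lborel)
      = (\<integral>\<^sup>+ v. F (1 / v) * ennreal (1 / v\<^sup>2) * indicator {0<..} v \<partial>lborel)"
    by (rule nn_subst_inv) (simp add: F_def)
  also have "\<dots> = (\<integral>\<^sup>+ v. ennreal (v powr (- 1 - \<gamma>) * (1 - exp (- c * v))) * indicator {0<..} v \<partial>lborel)"
  proof (intro nn_integral_cong)
    fix v :: real
    show "F (1 / v) * ennreal (1 / v\<^sup>2) * indicator {0<..} v =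
          ennreal (v powr (- 1 - \<gamma>) * (1 - exp (- c * v))) * indicator {0<..} v"
    proof (cases "0 < v")
      case True
      have "(1 / v) powr (\<gamma> - 1) * (1 / v\<^sup>2) = v powr (- 1 - \<gamma>)"
        using True by (simp add: powr_divide powr_diff powr_minus power2_eq_square field_simps
            flip: powr_add)
      moreover have "0 \<le> 1 - exp (- c * v)" using True c0 by simp
      ultimately show ?thesis using True
        by (simp add: F_def ennreal_mult'[symmetric] mult_ac)
    qed simp
  qed
  also have "\<dots> = ennreal \<bar>1 / c\<bar> * (\<integral>\<^sup>+ w. ennreal ((0 + 1 / c * w) powr (- 1 - \<gamma>) * (1 - exp (- c * (0 + 1 / c * w)))) * indicator {0<..} (0 + 1 / c * w) \<partial>lborel)"
    by (rule nn_integral_real_affine) (use c0 in auto)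
  also have "(\<integral>\<^sup>+ w. ennreal ((0 + 1 / c * w) powr (- 1 - \<gamma>) * (1 - exp (- c * (0 + 1 / c * w)))) * indicator {0<..} (0 + 1 / c * w) \<partial>lborel)
      = (\<integral>\<^sup>+ w. ennreal (c powr (1 + \<gamma>)) * (ennreal (w powr (- 1 - \<gamma>) * (1 - exp (- w))) * indicator {0<..} w) \<partial>lborel)"
  proof (intro nn_integral_cong)
    fix w :: real
    show "ennreal ((0 + 1 / c * w) powr (- 1 - \<gamma>) * (1 - exp (- c * (0 + 1 / c * w)))) * indicator {0<..} (0 + 1 / c * w)
      = ennreal (c powr (1 + \<gamma>)) * (ennreal (w powr (- 1 - \<gamma>) * (1 - exp (- w))) * indicator {0<..} w)"
    proof (cases "0 < w")
      case True
      have "(1 / c * w) powr (- 1 - \<gamma>) = c powr (1 + \<gamma>) * w powr (- 1 - \<gamma>)"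
      proof -
        have e: "c powr (1 + \<gamma>) * c powr (- 1 - \<gamma>) = 1" using c0 by (simp flip: powr_add)
        show ?thesis
          using True c0 e by (simp add: powr_mult powr_divide powr_minus field_simps)
      qed
      moreover have "c * (1 / c * w) = w" using c0 by simp
      moreover have "0 \<le> 1 - exp (- w)" using True by simp
      ultimately show ?thesis using True c0
        by (simp add: ennreal_mult'[symmetric] mult_ac zero_less_mult_iff)
    next
      case False
      then have "\<not> 0 < w / c" using c0 by (simp add: divide_less_0_iff not_less zero_less_divide_iff)
      then show ?thesis using c0 False by simp
    qed
  qed
  also have "\<dots> = ennreal (c powr (1 + \<gamma>)) * ennreal (- Gamma (- \<gamma>))"
    by (subst nn_integral_cmult) (auto simp: gamma_neg_integral[OF g0 g1])
  also have "ennreal \<bar>1 / c\<bar> * (ennreal (c powr (1 + \<gamma>)) * ennreal (- Gamma (- \<gamma>)))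
      = ennreal (c powr \<gamma> * (- Gamma (- \<gamma>)))"
  proof -
    have "\<bar>1 / c\<bar> * c powr (1 + \<gamma>) = c powr \<gamma>" using c0 by (simp add: powr_add)
    then show ?thesis using c0
      by (simp add: ennreal_mult'[symmetric] mult.assoc[symmetric] del: ennreal_mult')
  qed
  finally show ?thesis unfolding F_def .
qed

lemma nn_subst_powr:
  fixes F :: "real \<Rightarrow> ennreal" and p :: real
  assumes [measurable]: "F \<in> borel_measurable borel" and p: "0 < p"
  shows "(\<integral>\<^sup>+ y. F y * indicator {0<..} y \<partial>lborel)
       = (\<integral>\<^sup>+ u. F (u powr p) * ennreal (p * u powr (p - 1)) * indicator {0<..} u \<partial>lborel)"
proof -
  have "(\<integral>\<^sup>+ y. F y * indicator {0<..} y \<partial>lborel) = (\<integral>\<^sup>+ s. F (exp s) * ennreal (exp s) \<partial>lborel)"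
    by (rule nn_subst_exp) simp
  also have "\<dots> = ennreal \<bar>p\<bar> * (\<integral>\<^sup>+ s. F (exp (0 + p * s)) * ennreal (exp (0 + p * s)) \<partial>lborel)"
    by (rule nn_integral_real_affine) (use p in auto)
  also have "\<dots> = (\<integral>\<^sup>+ s. F (exp s powr p) * ennreal (p * exp s powr (p - 1)) * ennreal (exp s) \<partial>lborel)"
  proof -
    have "ennreal p * (F (exp (p * s)) * ennreal (exp (p * s))) = F (exp s powr p) * ennreal (p * exp s powr (p - 1)) * ennreal (exp s)" for s
    proof -
      have e1: "exp s powr p = exp (p * s)" by (simp add: powr_def)
      have e2: "p * exp s powr (p - 1) * exp s = p * exp (p * s)"
        by (simp add: powr_def exp_add[symmetric] algebra_simps)
      have e3: "ennreal (p * exp s powr (p - 1)) * ennreal (exp s) = ennreal p * ennreal (exp (p * s))"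
        using p by (simp add: ennreal_mult[symmetric] e2)
      have "F (exp s powr p) * ennreal (p * exp s powr (p - 1)) * ennreal (exp s)
          = F (exp (p * s)) * (ennreal p * ennreal (exp (p * s)))"
        by (simp only: mult.assoc e3 e1)
      then show ?thesis by (simp add: mult_ac)
    qed
    then show ?thesis using p by (subst nn_integral_cmult[symmetric]) auto
  qed
  also have "\<dots> = (\<integral>\<^sup>+ u. F (u powr p) * ennreal (p * u powr (p - 1)) * indicator {0<..} u \<partial>lborel)"
    by (rule nn_subst_exp[symmetric]) simp
  finally show ?thesis .
qed

lemma stretched_exp_finite:
  fixes c \<alpha> :: real assumes c: "0 < c" and a: "0 < \<alpha>"
  shows "(\<integral>\<^sup>+ y. ennreal (exp (- c * \<bar>y\<bar> powr \<alpha>)) \<partial>lborel) < \<infinity>"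
proof -
  define \<phi> where "\<phi> y = ennreal (exp (- c * \<bar>y\<bar> powr \<alpha>))" for y :: real
  have m[measurable]: "\<phi> \<in> borel_measurable borel" unfolding \<phi>_def by measurable
  have half: "(\<integral>\<^sup>+ y. \<phi> y * indicator {0<..} y \<partial>lborel) = ennreal (1 / \<alpha> * (Gamma (1 / \<alpha>) * c powr (- (1 / \<alpha>))))"
  proof -
    have "(\<integral>\<^sup>+ y. \<phi> y * indicator {0<..} y \<partial>lborel)
        = (\<integral>\<^sup>+ u. \<phi> (u powr (1 / \<alpha>)) * ennreal (1 / \<alpha> * u powr (1 / \<alpha> - 1)) * indicator {0<..} u \<partial>lborel)"
      by (rule nn_subst_powr) (use a in auto)
    also have "\<dots> = (\<integral>\<^sup>+ u. ennreal (1 / \<alpha>) * (ennreal (u powr (1 / \<alpha> - 1) * exp (- u * c)) * indicator {0<..} u) \<partial>lborel)"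
    proof (intro nn_integral_cong)
      fix u :: real
      show "\<phi> (u powr (1 / \<alpha>)) * ennreal (1 / \<alpha> * u powr (1 / \<alpha> - 1)) * indicator {0<..} u
          = ennreal (1 / \<alpha>) * (ennreal (u powr (1 / \<alpha> - 1) * exp (- u * c)) * indicator {0<..} u)"
      proof (cases "0 < u")
        case True
        have "\<bar>u powr (1 / \<alpha>)\<bar> powr \<alpha> = u" using True a by (simp add: powr_powr)
        then show ?thesis using True a
          by (simp add: \<phi>_def ennreal_mult'[symmetric] mult_ac del: ennreal_mult')
      qed simp
    qed
    also have "\<dots> = ennreal (1 / \<alpha>) * ennreal (Gamma (1 / \<alpha>) * c powr (- (1 / \<alpha>)))"
      using gamma_laplace[OF c, of "1 / \<alpha>"] a by (subst nn_integral_cmult) auto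
    also have "\<dots> = ennreal (1 / \<alpha> * (Gamma (1 / \<alpha>) * c powr (- (1 / \<alpha>))))"
      by (rule ennreal_mult'[symmetric]) (use a in simp)
    finally show ?thesis .
  qed
  have "(\<integral>\<^sup>+ y. \<phi> y \<partial>lborel) = (\<integral>\<^sup>+ y. \<phi> y * indicator {0<..} y + \<phi> (0 + -1 * y) * indicator {0<..} (0 + -1 * y) \<partial>lborel)"
  proof (intro nn_integral_cong_AE)
    show "AE y in lborel. \<phi> y = \<phi> y * indicator {0<..} y + \<phi> (0 + -1 * y) * indicator {0<..} (0 + -1 * y)"
      using AE_lborel_singleton[of 0]
      by eventually_elim (auto simp: \<phi>_def indicator_def)
  qed
  also have "\<dots> = (\<integral>\<^sup>+ y. \<phi> y * indicator {0<..} y \<partial>lborel) + (\<integral>\<^sup>+ y. \<phi> (0 + -1 * y) * indicator {0<..} (0 + -1 * y) \<partial>lborel)"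
    by (rule nn_integral_add) auto
  also have "(\<integral>\<^sup>+ y. \<phi> (0 + -1 * y) * indicator {0<..} (0 + -1 * y) \<partial>lborel) = (\<integral>\<^sup>+ y. \<phi> y * indicator {0<..} y \<partial>lborel)"
    using nn_integral_real_affine[of "\<lambda>y. \<phi> y * indicator {0<..} y" "-1" 0] by simp
  finally show ?thesis unfolding \<phi>_def[symmetric] half by simp
qed


lemma kernel_bound_integrable:
  fixes t \<alpha> :: real assumes t: "0 < t" and a: "0 < \<alpha>"
  shows "integrable lborel (\<lambda>\<xi>::'n::euclidean_space. \<Prod>b\<in>Basis. exp (- (t / real DIM('n)) * \<bar>\<xi> \<bullet> b\<bar> powr \<alpha>))"
proof -
  define c where "c = t / real DIM('n)"
  have c: "0 < c" using t by (simp add: c_def)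
  have "(\<integral>\<^sup>+ \<xi>. ennreal (norm (\<Prod>b\<in>Basis. exp (- c * \<bar>\<xi> \<bullet> b\<bar> powr \<alpha>))) \<partial>(lborel::'n measure))
      = (\<integral>\<^sup>+ \<xi>. (\<Prod>b\<in>Basis. ennreal (exp (- c * \<bar>\<xi> \<bullet> b\<bar> powr \<alpha>))) \<partial>(lborel::'n measure))"
    by (intro nn_integral_cong) (simp add: prod_ennreal abs_prod prod_nonneg)
  also have "\<dots> = (\<Prod>b\<in>(Basis::'n set). (\<integral>\<^sup>+ y. ennreal (exp (- c * \<bar>y\<bar> powr \<alpha>)) \<partial>lborel))"
    by (rule nn_integral_lborel_prod) auto
  also have "\<dots> < \<infinity>"
    using stretched_exp_finite[OF c a] by (simp add: power_less_top_ennreal)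
  finally show ?thesis unfolding c_def[symmetric]
    by (intro integrableI_bounded) auto
qed

lemma kernel_le_bound:
  fixes \<xi> :: "'n::euclidean_space" and t \<alpha> :: real assumes t: "0 < t" and a: "0 < \<alpha>"
  shows "exp (- t * norm \<xi> powr \<alpha>) \<le> (\<Prod>b\<in>Basis. exp (- (t / real DIM('n)) * \<bar>\<xi> \<bullet> b\<bar> powr \<alpha>))"
proof -
  have "(\<Sum>b\<in>(Basis::'n set). (t / real DIM('n)) * \<bar>\<xi> \<bullet> b\<bar> powr \<alpha>) \<le> (\<Sum>b\<in>(Basis::'n set). (t / real DIM('n)) * norm \<xi> powr \<alpha>)"
    using t a by (intro sum_mono mult_left_mono powr_mono2 Basis_le_norm) auto
  also have "\<dots> = t * norm \<xi> powr \<alpha>" by simp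
  finally have "- t * norm \<xi> powr \<alpha> \<le> (\<Sum>b\<in>(Basis::'n set). - (t / real DIM('n)) * \<bar>\<xi> \<bullet> b\<bar> powr \<alpha>)"
    by (simp add: sum_negf)
  then show ?thesis by (simp add: exp_sum[symmetric])
qed

lemma kernel_integrable:
  fixes y :: "'n::euclidean_space" and t \<alpha> :: real assumes t: "0 < t" and a: "0 < \<alpha>"
  shows "integrable lborel (\<lambda>\<xi>::'n. exp (- \<i> * complex_of_real (\<xi> \<bullet> y)) * complex_of_real (exp (- t * norm \<xi> powr \<alpha>)))"
    "integrable lborel (\<lambda>\<xi>::'n. exp (- t * norm \<xi> powr \<alpha>))"
    "integrable lborel (\<lambda>\<xi>::'n. cos (\<xi> \<bullet> y) * exp (- t * norm \<xi> powr \<alpha>))"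
proof -
  note B = kernel_bound_integrable[OF t a, where 'n='n]
  have bnd: "exp (- t * norm x powr \<alpha>) \<le> norm (\<Prod>b\<in>Basis. exp (- (t / real DIM('n)) * \<bar>x \<bullet> b\<bar> powr \<alpha>))" for x :: 'n
    by (rule order.trans[OF kernel_le_bound[OF t a]]) simp
  show "integrable lborel (\<lambda>\<xi>::'n. exp (- \<i> * complex_of_real (\<xi> \<bullet> y)) * complex_of_real (exp (- t * norm \<xi> powr \<alpha>)))"
  proof (rule Bochner_Integration.integrable_bound[OF B])
    show "AE x in lborel. norm (exp (- \<i> * complex_of_real (x \<bullet> y)) * complex_of_real (exp (- t * norm x powr \<alpha>)))
       \<le> norm (\<Prod>b\<in>Basis. exp (- (t / real DIM('n)) * \<bar>x \<bullet> b\<bar> powr \<alpha>))"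
    proof (intro AE_I2)
      fix x :: 'n
      have "norm (exp (- \<i> * complex_of_real (x \<bullet> y)) * complex_of_real (exp (- t * norm x powr \<alpha>)))
          = exp (- t * norm x powr \<alpha>)" by (simp add: norm_mult)
      then show "norm (exp (- \<i> * complex_of_real (x \<bullet> y)) * complex_of_real (exp (- t * norm x powr \<alpha>)))
       \<le> norm (\<Prod>b\<in>Basis. exp (- (t / real DIM('n)) * \<bar>x \<bullet> b\<bar> powr \<alpha>))" using bnd[of x] by simp
    qed
  qed simp
  show "integrable lborel (\<lambda>\<xi>::'n. exp (- t * norm \<xi> powr \<alpha>))"
    using bnd by (intro Bochner_Integration.integrable_bound[OF B]) (auto intro!: AE_I2)
  have bnd2: "\<bar>cos (x \<bullet> y) * exp (- t * norm x powr \<alpha>)\<bar> \<le> exp (- t * norm x powr \<alpha>)" for x :: 'n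
    by (simp add: abs_mult mult_left_le_one_le)
  show "integrable lborel (\<lambda>\<xi>::'n. cos (\<xi> \<bullet> y) * exp (- t * norm \<xi> powr \<alpha>))"
    using bnd order.trans[OF bnd2 bnd] by (intro Bochner_Integration.integrable_bound[OF B]) (auto intro!: AE_I2)
qed

lemma stable_density_Re:
  fixes y :: "'n::euclidean_space" assumes t: "0 < t" and a: "0 < \<alpha>"
  shows "stable_density \<alpha> t y = (2 * pi) powr (- real DIM('n)) *
           (\<integral>\<xi>. cos (\<xi> \<bullet> y) * exp (- t * norm \<xi> powr \<alpha>) \<partial>(lborel::'n measure))"
proof -
  have "Re (\<integral>\<xi>. exp (- \<i> * complex_of_real (\<xi> \<bullet> y)) * complex_of_real (exp (- t * norm \<xi> powr \<alpha>)) \<partial>(lborel::'n measure))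
      = (\<integral>\<xi>. Re (exp (- \<i> * complex_of_real (\<xi> \<bullet> y)) * complex_of_real (exp (- t * norm \<xi> powr \<alpha>))) \<partial>(lborel::'n measure))"
    by (rule integral_bounded_linear[OF bounded_linear_Re kernel_integrable(1)[OF t a], symmetric])
  also have "\<dots> = (\<integral>\<xi>. cos (\<xi> \<bullet> y) * exp (- t * norm \<xi> powr \<alpha>) \<partial>(lborel::'n measure))"
    by (intro Bochner_Integration.integral_cong refl) (simp add: Re_exp Im_exp)
  finally show ?thesis unfolding stable_density_def by simp
qed

lemma stable_density_diff:
  fixes x :: "'n::euclidean_space" assumes t: "0 < t" and a: "0 < \<alpha>"
  shows "stable_density \<alpha> t (0::'n) - stable_density \<alpha> t x = (2 * pi) powr (- real DIM('n)) *
           (\<integral>\<xi>. (1 - cos (\<xi> \<bullet> x)) * exp (- t * norm \<xi> powr \<alpha>) \<partial>(lborel::'n measure))"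
    "integrable lborel (\<lambda>\<xi>::'n. (1 - cos (\<xi> \<bullet> x)) * exp (- t * norm \<xi> powr \<alpha>))"
proof -
  have i1: "integrable lborel (\<lambda>\<xi>::'n. exp (- t * norm \<xi> powr \<alpha>))" by (rule kernel_integrable(2)[OF t a])
  have i2: "integrable lborel (\<lambda>\<xi>::'n. cos (\<xi> \<bullet> x) * exp (- t * norm \<xi> powr \<alpha>))" by (rule kernel_integrable(3)[OF t a])
  have eq: "(\<lambda>\<xi>::'n. (1 - cos (\<xi> \<bullet> x)) * exp (- t * norm \<xi> powr \<alpha>)) =
      (\<lambda>\<xi>. exp (- t * norm \<xi> powr \<alpha>) - cos (\<xi> \<bullet> x) * exp (- t * norm \<xi> powr \<alpha>))"
    by (simp add: fun_eq_iff algebra_simps)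
  show "integrable lborel (\<lambda>\<xi>::'n. (1 - cos (\<xi> \<bullet> x)) * exp (- t * norm \<xi> powr \<alpha>))"
    unfolding eq using i1 i2 by (rule Bochner_Integration.integrable_diff)
  show "stable_density \<alpha> t (0::'n) - stable_density \<alpha> t x = (2 * pi) powr (- real DIM('n)) *
           (\<integral>\<xi>. (1 - cos (\<xi> \<bullet> x)) * exp (- t * norm \<xi> powr \<alpha>) \<partial>(lborel::'n measure))"
    unfolding eq stable_density_Re[OF t a] Bochner_Integration.integral_diff[OF i1 i2]
    by (simp add: algebra_simps)
qed


lemma gauss_cos:
  fixes y :: "'n::euclidean_space" and u :: real assumes u: "0 < u"
  shows "integrable lborel (\<lambda>\<xi>::'n. cos (\<xi> \<bullet> y) * exp (- u * (norm \<xi>)\<^sup>2))"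
    "(\<integral>\<xi>. cos (\<xi> \<bullet> y) * exp (- u * (norm \<xi>)\<^sup>2) \<partial>(lborel::'n measure))
      = (pi / u) powr (real DIM('n) / 2) * exp (- (norm y)\<^sup>2 / (4 * u))"
proof -
  note I = gauss_ft[OF u, of y]
  show int: "integrable lborel (\<lambda>\<xi>::'n. cos (\<xi> \<bullet> y) * exp (- u * (norm \<xi>)\<^sup>2))"
    by (rule Bochner_Integration.integrable_bound[OF I(1)])
       (auto intro!: AE_I2 simp: norm_mult abs_mult mult_left_le_one_le)
  have "(\<integral>\<xi>. cos (\<xi> \<bullet> y) * exp (- u * (norm \<xi>)\<^sup>2) \<partial>(lborel::'n measure))
     = (\<integral>\<xi>. Re (exp (- \<i> * complex_of_real (\<xi> \<bullet> y)) * complex_of_real (exp (- u * (norm \<xi>)\<^sup>2))) \<partial>(lborel::'n measure))"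
    by (intro Bochner_Integration.integral_cong refl) (simp add: Re_exp Im_exp)
  also have "\<dots> = Re (\<integral>\<xi>. exp (- \<i> * complex_of_real (\<xi> \<bullet> y)) * complex_of_real (exp (- u * (norm \<xi>)\<^sup>2)) \<partial>(lborel::'n measure))"
    by (rule integral_bounded_linear[OF bounded_linear_Re I(1)])
  also have "\<dots> = (pi / u) powr (real DIM('n) / 2) * exp (- (norm y)\<^sup>2 / (4 * u))"
    unfolding I(2) by simp
  finally show "(\<integral>\<xi>. cos (\<xi> \<bullet> y) * exp (- u * (norm \<xi>)\<^sup>2) \<partial>(lborel::'n measure))
      = (pi / u) powr (real DIM('n) / 2) * exp (- (norm y)\<^sup>2 / (4 * u))" .
qed

lemma gauss_one_minus_cos:
  fixes x :: "'n::euclidean_space" and u :: real assumes u: "0 < u"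
  shows "integrable lborel (\<lambda>\<xi>::'n. (1 - cos (\<xi> \<bullet> x)) * exp (- u * (norm \<xi>)\<^sup>2))"
    "(\<integral>\<xi>. (1 - cos (\<xi> \<bullet> x)) * exp (- u * (norm \<xi>)\<^sup>2) \<partial>(lborel::'n measure))
      = (pi / u) powr (real DIM('n) / 2) * (1 - exp (- (norm x)\<^sup>2 / (4 * u)))"
proof -
  note I0 = gauss_cos[OF u, of "0::'n"]
  note Ix = gauss_cos[OF u, of x]
  have eq: "(\<lambda>\<xi>::'n. (1 - cos (\<xi> \<bullet> x)) * exp (- u * (norm \<xi>)\<^sup>2)) =
      (\<lambda>\<xi>. cos (\<xi> \<bullet> 0) * exp (- u * (norm \<xi>)\<^sup>2) - cos (\<xi> \<bullet> x) * exp (- u * (norm \<xi>)\<^sup>2))"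
    by (simp add: fun_eq_iff algebra_simps)
  show "integrable lborel (\<lambda>\<xi>::'n. (1 - cos (\<xi> \<bullet> x)) * exp (- u * (norm \<xi>)\<^sup>2))"
    unfolding eq using I0(1) Ix(1) by (rule Bochner_Integration.integrable_diff)
  show "(\<integral>\<xi>. (1 - cos (\<xi> \<bullet> x)) * exp (- u * (norm \<xi>)\<^sup>2) \<partial>(lborel::'n measure))
      = (pi / u) powr (real DIM('n) / 2) * (1 - exp (- (norm x)\<^sup>2 / (4 * u)))"
    unfolding eq Bochner_Integration.integral_diff[OF I0(1) Ix(1)] I0(2) Ix(2)
    by (simp add: algebra_simps)
qed


lemma meas_F:
  fixes x :: "'n::euclidean_space"
  shows "(\<lambda>t. indicator {0<..} t *\<^sub>R ((stable_density \<alpha> t (0::'n) - stable_density \<alpha> t x) * t powr e)) \<in> borel_measurable lborel"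
  unfolding stable_density_def by measurable

lemma meas_G:
  fixes x :: "'n::euclidean_space"
  shows "case_prod (\<lambda>(\<xi>::'n) t. ennreal (if 0 < t then C * t powr e * ((1 - cos (\<xi> \<bullet> x)) * exp (- t * norm \<xi> powr \<alpha>)) else 0))
     \<in> borel_measurable (lborel \<Otimes>\<^sub>M lborel)"
  by measurable

lemma meas_L:
  fixes x :: "'n::euclidean_space"
  shows "case_prod (\<lambda>(\<xi>::'n) u. ennreal (if 0 < u then C * (1 - cos (\<xi> \<bullet> x)) * (u powr e * exp (- u * (norm \<xi>)\<^sup>2)) else 0))
     \<in> borel_measurable (lborel \<Otimes>\<^sub>M lborel)"
  by measurable


theorem lemma2p2:
  fixes x :: "'n::euclidean_space" and \<alpha> \<beta> :: real
  assumes "0 < \<alpha>" and "\<alpha> < min (real DIM('n)) 2"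
    and "0 < \<beta>" and "\<beta> < 2"
  defines "d \<equiv> real DIM('n)"
  shows "set_integrable lborel {0<..}
           (\<lambda>t. (stable_density \<alpha> t (0::'n) - stable_density \<alpha> t x)
                 * t powr ((d - \<alpha> + \<beta>) / \<alpha>))
       \<and> norm x powr \<beta> =
           2 powr (d + \<beta>) * pi powr (d / 2)
           * Gamma ((d + \<beta>) / 2) / (Gamma ((d + \<beta>) / \<alpha>) * \<bar>Gamma (- \<beta> / 2)\<bar>)
           * (LINT t:{0<..}|lborel. (stable_density \<alpha> t (0::'n) - stable_density \<alpha> t x)
                 * t powr ((d - \<alpha> + \<beta>) / \<alpha>))"
proof -
  note a = assms(1) and b0 = assms(3) and b2 = assms(4)
  have d1: "1 \<le> d" unfolding d_def by (simp add: DIM_positive Suc_le_eq)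
  define s where "s = (d + \<beta>) / \<alpha>"
  define h where "h = (d + \<beta>) / 2"
  define \<gamma> where "\<gamma> = \<beta> / 2"
  define C where "C = (2 * pi) powr (- d)"
  define c where "c = (norm x)\<^sup>2 / 4"
  define F where "F t = (stable_density \<alpha> t (0::'n) - stable_density \<alpha> t x) * t powr ((d - \<alpha> + \<beta>) / \<alpha>)" for t
  have s0: "0 < s" using a b0 d1 by (simp add: s_def)
  have h0: "0 < h" using b0 d1 by (simp add: h_def)
  have g0: "0 < \<gamma>" and g1: "\<gamma> < 1" using b0 b2 by (auto simp: \<gamma>_def)
  have C0: "0 < C" by (simp add: C_def)
  have c0: "0 \<le> c" by (simp add: c_def)
  have sm1: "(d - \<alpha> + \<beta>) / \<alpha> = s - 1" using a by (simp add: s_def field_simps)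
  have Gs: "0 < Gamma s" using s0 by (rule Gamma_real_pos)
  have Gh: "0 < Gamma h" using h0 by (rule Gamma_real_pos)
  have Gneg: "0 < - Gamma (- \<gamma>)"
  proof -
    have "- \<gamma> \<notin> \<int>\<^sub>\<le>\<^sub>0"
    proof
      assume "- \<gamma> \<in> \<int>\<^sub>\<le>\<^sub>0"
      then obtain n where n: "- \<gamma> = real_of_int n" by (auto elim!: nonpos_Ints_cases)
      then have "real_of_int n < 0" "real_of_int n > -1" using g0 g1 by auto
      then have "n < 0" "n > -1" by linarith+
      then show False by simp
    qed
    from Gamma_plus1[OF this] have "Gamma (1 - \<gamma>) = - \<gamma> * Gamma (- \<gamma>)" by simp
    moreover have "0 < Gamma (1 - \<gamma>)" using g1 by (intro Gamma_real_pos) simp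
    ultimately have "\<gamma> * Gamma (- \<gamma>) < 0" by simp
    then show ?thesis using g0 by (simp add: mult_less_0_iff)
  qed
  define V where "V = C * Gamma s / Gamma h * pi powr (d / 2) * (c powr \<gamma> * (- Gamma (- \<gamma>)))"
  have V0: "0 \<le> V" unfolding V_def using C0 Gs Gh Gneg c0 by (intro mult_nonneg_nonneg divide_nonneg_nonneg) auto
  have Ft: "F t = C * t powr (s - 1) * (\<integral>\<xi>. (1 - cos (\<xi> \<bullet> x)) * exp (- t * norm \<xi> powr \<alpha>) \<partial>(lborel::'n measure))"
    if "0 < t" for t
    unfolding F_def stable_density_diff(1)[OF that a] C_def d_def using sm1[unfolded d_def] by (simp add: mult_ac)
  define G where "G \<xi> t = ennreal (if 0 < t then C * t powr (s - 1) * ((1 - cos (\<xi> \<bullet> x)) * exp (- t * norm \<xi> powr \<alpha>)) else 0)"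
    for \<xi> :: 'n and t :: real
  define L where "L \<xi> u = ennreal (if 0 < u then (C * Gamma s / Gamma h) * (1 - cos (\<xi> \<bullet> x)) * (u powr (h - 1) * exp (- u * (norm \<xi>)\<^sup>2)) else 0)"
    for \<xi> :: 'n and u :: real
  have nn: "(\<integral>\<^sup>+ t. ennreal (indicator {0<..} t *\<^sub>R F t) \<partial>lborel) = ennreal V"
  proof -
    have "(\<integral>\<^sup>+ t. ennreal (indicator {0<..} t *\<^sub>R F t) \<partial>lborel) = (\<integral>\<^sup>+ t. (\<integral>\<^sup>+ \<xi>. G \<xi> t \<partial>lborel) \<partial>lborel)"
    proof (rule nn_integral_cong)
      fix t :: real
      show "ennreal (indicator {0<..} t *\<^sub>R F t) = (\<integral>\<^sup>+ \<xi>. G \<xi> t \<partial>lborel)"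
      proof (cases "0 < t")
        case True
        note I = stable_density_diff(2)[OF True a, of x]
        have "(\<integral>\<^sup>+ \<xi>. G \<xi> t \<partial>lborel) = (\<integral>\<^sup>+ \<xi>. ennreal (C * t powr (s - 1) * ((1 - cos (\<xi> \<bullet> x)) * exp (- t * norm \<xi> powr \<alpha>))) \<partial>(lborel::'n measure))"
          using True by (simp add: G_def)
        also have "\<dots> = ennreal (\<integral>\<xi>. C * t powr (s - 1) * ((1 - cos (\<xi> \<bullet> x)) * exp (- t * norm \<xi> powr \<alpha>)) \<partial>(lborel::'n measure))"
          using I C0 by (intro nn_integral_eq_integral) (auto simp: cos_le_one)
        also have "\<dots> = ennreal (F t)"
          using True by (simp add: Ft)
        finally show ?thesis using True by simp
      next
        case False
        then show ?thesis by (simp add: G_def)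
      qed
    qed
    also have "\<dots> = (\<integral>\<^sup>+ \<xi>. (\<integral>\<^sup>+ t. G \<xi> t \<partial>lborel) \<partial>lborel)"
      unfolding G_def by (rule lborel_pair.Fubini') (rule meas_G)
    also have "\<dots> = (\<integral>\<^sup>+ \<xi>. (\<integral>\<^sup>+ u. L \<xi> u \<partial>lborel) \<partial>lborel)"
    proof (rule nn_integral_cong)
      fix \<xi> :: 'n
      show "(\<integral>\<^sup>+ t. G \<xi> t \<partial>lborel) = (\<integral>\<^sup>+ u. L \<xi> u \<partial>lborel)"
      proof (cases "\<xi> = 0")
        case True
        have "G \<xi> t = 0" for t using True by (simp add: G_def)
        moreover have "L \<xi> u = 0" for u using True by (simp add: L_def)
        ultimately show ?thesis by simp
      next
        case False
        then have n0: "0 < norm \<xi>" by simp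
        have cosnn: "0 \<le> 1 - cos (\<xi> \<bullet> x)" by (simp add: cos_le_one)
        define K where "K = C * (1 - cos (\<xi> \<bullet> x))"
        have K0: "0 \<le> K" using C0 cosnn by (simp add: K_def)
        define K' where "K' = C * Gamma s / Gamma h * (1 - cos (\<xi> \<bullet> x))"
        have K'0: "0 \<le> K'" using C0 cosnn Gs Gh by (simp add: K'_def)
        define P where "P = norm \<xi> powr (- (d + \<beta>))"
        have e1: "(\<integral>\<^sup>+ t. G \<xi> t \<partial>lborel) = (\<integral>\<^sup>+ t. ennreal K *
             (ennreal (t powr (s - 1) * exp (- t * norm \<xi> powr \<alpha>)) * indicator {0<..} t) \<partial>lborel)"
        proof (intro nn_integral_cong)
          fix t :: real
          show "G \<xi> t = ennreal K * (ennreal (t powr (s - 1) * exp (- t * norm \<xi> powr \<alpha>)) * indicator {0<..} t)"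
          proof (cases "0 < t")
            case True
            have "C * t powr (s - 1) * ((1 - cos (\<xi> \<bullet> x)) * exp (- t * norm \<xi> powr \<alpha>))
                = K * (t powr (s - 1) * exp (- t * norm \<xi> powr \<alpha>))" unfolding K_def by (simp only: mult_ac)
            then have "G \<xi> t = ennreal (K * (t powr (s - 1) * exp (- t * norm \<xi> powr \<alpha>)))"
              unfolding G_def using True by (simp only: if_True)
            also have "\<dots> = ennreal K * ennreal (t powr (s - 1) * exp (- t * norm \<xi> powr \<alpha>))"
              by (rule ennreal_mult) (use K0 in auto)
            finally show ?thesis using True by simp
          qed (simp add: G_def)
        qed
        have e2: "(\<integral>\<^sup>+ t. ennreal K * (ennreal (t powr (s - 1) * exp (- t * norm \<xi> powr \<alpha>)) * indicator {0<..} t) \<partial>lborel)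
            = ennreal K * ennreal (Gamma s * P)"
        proof -
          have "(norm \<xi> powr \<alpha>) powr (- s) = norm \<xi> powr (\<alpha> * - s)" by (rule powr_powr)
          also have "\<alpha> * - s = - (d + \<beta>)" using a by (simp add: s_def)
          finally have pP: "(norm \<xi> powr \<alpha>) powr (- s) = P" by (simp add: P_def)
          have gl: "(\<integral>\<^sup>+ t. ennreal (t powr (s - 1) * exp (- t * norm \<xi> powr \<alpha>)) * indicator {0<..} t \<partial>lborel)
              = ennreal (Gamma s * (norm \<xi> powr \<alpha>) powr (- s))"
            by (rule gamma_laplace) (use n0 a s0 in auto)
          show ?thesis by (subst nn_integral_cmult) (simp, simp only: gl pP)
        qed
        have e3: "ennreal K * ennreal (Gamma s * P) = ennreal K' * ennreal (Gamma h * P)"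
        proof -
          have P0: "0 \<le> P" by (simp add: P_def)
          have "K * (Gamma s * P) = K' * (Gamma h * P)" using Gh by (simp add: K_def K'_def)
          then show ?thesis using K0 K'0 P0 Gs Gh by (simp add: ennreal_mult[symmetric])
        qed
        have e4: "ennreal (Gamma h * P)
           = (\<integral>\<^sup>+ u. ennreal (u powr (h - 1) * exp (- u * (norm \<xi>)\<^sup>2)) * indicator {0<..} u \<partial>lborel)"
        proof -
          have "((norm \<xi>)\<^sup>2) powr (- h) = P"
          proof -
            have "((norm \<xi>)\<^sup>2) powr (- h) = (norm \<xi> powr 2) powr (- h)" using n0 by (simp add: powr_numeral)
            also have "\<dots> = norm \<xi> powr (2 * - h)" by (rule powr_powr)
            also have "2 * - h = - (d + \<beta>)" by (simp add: h_def field_simps)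
            finally show ?thesis by (simp add: P_def)
          qed
          moreover have "(\<integral>\<^sup>+ u. ennreal (u powr (h - 1) * exp (- u * (norm \<xi>)\<^sup>2)) * indicator {0<..} u \<partial>lborel)
              = ennreal (Gamma h * ((norm \<xi>)\<^sup>2) powr (- h))"
            by (rule gamma_laplace) (use n0 h0 in auto)
          ultimately show ?thesis by simp
        qed
        have e5: "ennreal K' * (\<integral>\<^sup>+ u. ennreal (u powr (h - 1) * exp (- u * (norm \<xi>)\<^sup>2)) * indicator {0<..} u \<partial>lborel)
            = (\<integral>\<^sup>+ u. L \<xi> u \<partial>lborel)"
        proof -
          have "ennreal K' * (\<integral>\<^sup>+ u. ennreal (u powr (h - 1) * exp (- u * (norm \<xi>)\<^sup>2)) * indicator {0<..} u \<partial>lborel)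
             = (\<integral>\<^sup>+ u. ennreal K' * (ennreal (u powr (h - 1) * exp (- u * (norm \<xi>)\<^sup>2)) * indicator {0<..} u) \<partial>lborel)"
            by (rule nn_integral_cmult[symmetric]) simp
          also have "\<dots> = (\<integral>\<^sup>+ u. L \<xi> u \<partial>lborel)"
          proof (intro nn_integral_cong)
            fix u :: real
            show "ennreal K' * (ennreal (u powr (h - 1) * exp (- u * (norm \<xi>)\<^sup>2)) * indicator {0<..} u) = L \<xi> u"
            proof (cases "0 < u")
              case True
              have "C * Gamma s / Gamma h * (1 - cos (\<xi> \<bullet> x)) * (u powr (h - 1) * exp (- u * (norm \<xi>)\<^sup>2))
                  = K' * (u powr (h - 1) * exp (- u * (norm \<xi>)\<^sup>2))" unfolding K'_def by (simp only: mult_ac)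
              then have "L \<xi> u = ennreal (K' * (u powr (h - 1) * exp (- u * (norm \<xi>)\<^sup>2)))"
                unfolding L_def using True by (simp only: if_True)
              also have "\<dots> = ennreal K' * ennreal (u powr (h - 1) * exp (- u * (norm \<xi>)\<^sup>2))"
                by (rule ennreal_mult) (use K'0 in auto)
              finally show ?thesis using True by simp
            qed (simp add: L_def)
          qed
          finally show ?thesis .
        qed
        show ?thesis by (simp only: e1 e2 e3 e4 e5)
      qed
    qed
    also have "\<dots> = (\<integral>\<^sup>+ u. (\<integral>\<^sup>+ \<xi>. L \<xi> u \<partial>lborel) \<partial>lborel)"
      unfolding L_def by (rule lborel_pair.Fubini'[symmetric]) (rule meas_L)
    also have "\<dots> = (\<integral>\<^sup>+ u. ennreal (C * Gamma s / Gamma h * pi powr (d / 2)) *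
         (ennreal (u powr (\<gamma> - 1) * (1 - exp (- c / u))) * indicator {0<..} u) \<partial>lborel)"
    proof (rule nn_integral_cong)
      fix u :: real
      show "(\<integral>\<^sup>+ \<xi>. L \<xi> u \<partial>lborel) = ennreal (C * Gamma s / Gamma h * pi powr (d / 2)) *
         (ennreal (u powr (\<gamma> - 1) * (1 - exp (- c / u))) * indicator {0<..} u)"
      proof (cases "0 < u")
        case True
        note I = gauss_one_minus_cos[OF True, of x]
        have "(\<integral>\<^sup>+ \<xi>. L \<xi> u \<partial>lborel) = (\<integral>\<^sup>+ \<xi>. ennreal ((C * Gamma s / Gamma h * u powr (h - 1)) * ((1 - cos (\<xi> \<bullet> x)) * exp (- u * (norm \<xi>)\<^sup>2))) \<partial>(lborel::'n measure))"
          using True by (intro nn_integral_cong) (simp add: L_def mult_ac)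
        also have "\<dots> = ennreal (\<integral>\<xi>. (C * Gamma s / Gamma h * u powr (h - 1)) * ((1 - cos (\<xi> \<bullet> x)) * exp (- u * (norm \<xi>)\<^sup>2)) \<partial>(lborel::'n measure))"
          using I C0 Gs Gh by (intro nn_integral_eq_integral) (auto simp: cos_le_one)
        also have "\<dots> = ennreal ((C * Gamma s / Gamma h * u powr (h - 1)) * ((pi / u) powr (d / 2) * (1 - exp (- (norm x)\<^sup>2 / (4 * u)))))"
          using I unfolding d_def by simp
        also have "(C * Gamma s / Gamma h * u powr (h - 1)) * ((pi / u) powr (d / 2) * (1 - exp (- (norm x)\<^sup>2 / (4 * u))))
            = (C * Gamma s / Gamma h * pi powr (d / 2)) * (u powr (\<gamma> - 1) * (1 - exp (- c / u)))"
        proof -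
          have "u powr (h - 1) * (pi / u) powr (d / 2) = pi powr (d / 2) * u powr (\<gamma> - 1)"
            using True by (simp add: powr_divide h_def \<gamma>_def powr_diff field_simps flip: powr_add)
          moreover have "- (norm x)\<^sup>2 / (4 * u) = - c / u" by (simp add: c_def)
          ultimately show ?thesis by (simp add: mult_ac)
        qed
        also have "ennreal ((C * Gamma s / Gamma h * pi powr (d / 2)) * (u powr (\<gamma> - 1) * (1 - exp (- c / u))))
          = ennreal (C * Gamma s / Gamma h * pi powr (d / 2)) * (ennreal (u powr (\<gamma> - 1) * (1 - exp (- c / u))) * indicator {0<..} u)"
        proof -
          have Y0: "0 \<le> u powr (\<gamma> - 1) * (1 - exp (- c / u))"
            using True c0 by (intro mult_nonneg_nonneg) (auto simp: divide_nonneg_pos)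
          have K10: "0 \<le> C * Gamma s / Gamma h * pi powr (d / 2)" using C0 Gs Gh by simp
          show ?thesis by (simp only: ennreal_mult[OF K10 Y0]) (simp add: True)
        qed
        finally show ?thesis .
      next
        case False
        then show ?thesis by (simp add: L_def)
      qed
    qed
    also have "\<dots> = ennreal (C * Gamma s / Gamma h * pi powr (d / 2)) * ennreal (c powr \<gamma> * (- Gamma (- \<gamma>)))"
      by (subst nn_integral_cmult) (simp, simp only: J_integral[OF g0 g1 c0])
    also have "\<dots> = ennreal V"
    proof -
      have K10: "0 \<le> C * Gamma s / Gamma h * pi powr (d / 2)" using C0 Gs Gh by simp
      show ?thesis unfolding V_def by (rule ennreal_mult'[symmetric, OF K10])
    qed
    finally show ?thesis .
  qed
  have Fnn: "AE t in lborel. 0 \<le> indicator {0<..} t *\<^sub>R F t"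
  proof (intro AE_I2)
    fix t :: real
    show "0 \<le> indicator {0<..} t *\<^sub>R F t"
    proof (cases "0 < t")
      case True
      have "0 \<le> (\<integral>\<xi>. (1 - cos (\<xi> \<bullet> x)) * exp (- t * norm \<xi> powr \<alpha>) \<partial>(lborel::'n measure))"
        by (intro Bochner_Integration.integral_nonneg) (simp add: cos_le_one)
      then show ?thesis using True C0 by (simp add: Ft)
    qed simp
  qed
  have hb: "has_bochner_integral lborel (\<lambda>t. indicator {0<..} t *\<^sub>R F t) V"
    by (rule has_bochner_integral_nn_integral[OF _ Fnn V0 nn]) (unfold F_def, rule meas_F)
  have SI: "set_integrable lborel {0<..} F"
    using hb unfolding set_integrable_def by (rule integrable.intros)
  have LI: "(LINT t:{0<..}|lborel. F t) = V"
    using hb unfolding set_lebesgue_integral_def by (rule has_bochner_integral_integral_eq)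
  have final: "norm x powr \<beta> = 2 powr (d + \<beta>) * pi powr (d / 2) * Gamma h / (Gamma s * \<bar>Gamma (- \<gamma>)\<bar>) * V"
  proof -
    have cg: "c powr \<gamma> = norm x powr \<beta> / 2 powr \<beta>"
    proof (cases "x = 0")
      case True
      then show ?thesis using g0 b0 by (simp add: c_def)
    next
      case False
      then have nx: "0 < norm x" by simp
      have cc: "c = norm x powr 2 / 2 powr 2" unfolding c_def using nx by (simp add: powr_numeral)
      have "c powr \<gamma> = (norm x powr 2) powr (\<beta> / 2) / (2 powr 2) powr (\<beta> / 2)"
        unfolding cc \<gamma>_def by (rule powr_divide; simp)
      also have "\<dots> = norm x powr (2 * (\<beta> / 2)) / 2 powr (2 * (\<beta> / 2))" by (simp only: powr_powr)
      also have "\<dots> = norm x powr \<beta> / 2 powr \<beta>" by simp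
      finally show ?thesis .
    qed
    have ab: "\<bar>Gamma (- \<gamma>)\<bar> = - Gamma (- \<gamma>)" using Gneg by simp
    have pp: "pi powr (d / 2) * pi powr (d / 2) = pi powr d" by (simp flip: powr_add)
    have CC: "C = 2 powr (- d) * pi powr (- d)" unfolding C_def by (simp add: powr_mult)
    have t2: "2 powr (d + \<beta>) * 2 powr (- d) = 2 powr \<beta>" by (simp flip: powr_add)
    have tp: "pi powr d * pi powr (- d) = 1" by (simp flip: powr_add)
    have "2 powr (d + \<beta>) * pi powr (d / 2) * Gamma h / (Gamma s * \<bar>Gamma (- \<gamma>)\<bar>) * V
        = (2 powr (d + \<beta>) * 2 powr (- d)) * (pi powr (d / 2) * pi powr (d / 2)) * pi powr (- d) * c powr \<gamma>
          * ((Gamma h / Gamma h) * (Gamma s / Gamma s) * (- Gamma (- \<gamma>) / - Gamma (- \<gamma>)))"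
      unfolding V_def ab CC by (simp add: field_simps)
    also have "\<dots> = norm x powr \<beta>"
      using Gs Gh Gneg unfolding t2 pp cg by (simp add: mult.assoc[symmetric] tp)
    finally show ?thesis ..
  qed
  have mb: "- \<beta> / 2 = - \<gamma>" by (simp add: \<gamma>_def)
  show ?thesis
    using SI LI final unfolding F_def h_def s_def mb by simp
qed

end
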